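(* Let $m,q_1,\dots,q_m\in\mathbb N$ and let $\mathfrak H$ be a real separable Hilbert space with an isonormal Gaussian process. For $i=1,\dots,m$ let $G^{(i)}$ be a compact group with (left) Haar measure $\mu^{(i)}$, $G=G^{(1)}\times\cdots\times G^{(m)}$, $\mu=\mu^{(1)}\times\cdots\times\mu^{(m)}$. For $n\in\mathbb N$, $j\in\mathbb J_n=\{1,\dots,n\}$, let $e^{(i)}_{n,j}=e^{(i)}_j:G^{(i)}\to\mathfrak H^{\tilde\otimes q_i}$ and, for $(j_1,\dots,j_m)\in\mathbb J_n^m$ and $\mathbb x=(x^{(1)},\dots,x^{(m)})\in G$, let $A_n(j_1,\dots,j_m;\mathbb x)$ be random variables, such that $(\omega,\mathbb x)\mapsto A_n(j_1,\dots,j_m;\mathbb x)$ and $(\omega,x^{(i)})\mapsto I_{q_i}(e^{(i)}_j(x^{(i)}))$ are measurable and $\int_G|A_n(j_1,\dots,j_m;\mathbb x)\prod_{i=1}^mI_{q_i}(e^{(i)}_{j_i}(x^{(i)}))|\mu(d\mathbb x)<\infty$ a.s. Set $\mathbb H_n=\int_G\sum_{j_1,\dots,j_m=1}^nA_n(j_1,\dots,j_m;\mathbb x)\prod_{i=1}^mI_{q_i}(e^{(i)}_{j_i}(x^{(i)}))\,\mu(d\mathbb x)$. Suppose the localization condition: for every $i$ and $j\in\mathbb J_n$ there are $g^{(i)}_{n,j}\in G^{(i)}$ and a measurable set $\chi^{(i)}_n\subset G^{(i)}$ with $e^{(i)}_{n,j}(x)=e^{(i)}_{n,j}(x)1_{\chi^{(i)}_n}(g^{(i)}_{n,j}x)$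 for all $x\in G^{(i)}$. Define $$\mathring{\mathbb H}_n(\mathbb x)=\sum_{j_1,\dots,j_m=1}^nA_n\big(j_1,\dots,j_m;((g^{(i)}_{n,j_i})^{-1}x^{(i)})_{i=1}^m\big)\prod_{i=1}^mI_{q_i}\big(e^{(i)}_{j_i}((g^{(i)}_{n,j_i})^{-1}x^{(i)})\big).$$ Then $\mathbb H_n=\int_G\mathring{\mathbb H}_n(\mathbb x)\prod_{i=1}^m1_{\chi^{(i)}_n}(x^{(i)})\,\mu(d\mathbb x)$ and, for every $p\ge1$, $$\|\mathbb H_n\|_p\le\sup_{\mathbb x\in G}\|\mathring{\mathbb H}_n(\mathbb x)\|_p\;\mu\Big(\prod_{i=1}^m\chi^{(i)}_n\Big).$$
   Context: $I_q$ denotes the $q$-fold multiple Wiener integral and $\mathfrak H^{\tilde\otimes q}$ the symmetric $q$-fold tensor power of $\mathfrak H$; $gx$ denotes the group product (left translation by $g$). *)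

theory Defs
  imports "HOL-Probability.Probability" "HOL-Algebra.Group"
begin

definition borel_of_top :: "'a topology \<Rightarrow> 'a measure" where
  "borel_of_top T = sigma (topspace T) {U. openin T U}"

definition compact_topological_group :: "('g, 'b) monoid_scheme \<Rightarrow> 'g topology \<Rightarrow> bool" where
  "compact_topological_group G T \<longleftrightarrow>
     group G \<and> topspace T = carrier G \<and> compact_space T \<and> Hausdorff_space T \<and>
     continuous_map (prod_topology T T) T (\<lambda>(x, y). x \<otimes>\<^bsub>G\<^esub> y) \<and>
     continuous_map T T (\<lambda>x. inv\<^bsub>G\<^esub> x)"

definition left_haar_measure :: "('g, 'b) monoid_scheme \<Rightarrow> 'g topology \<Rightarrow> 'g measure \<Rightarrow> bool" where
  "left_haar_measure G T \<mu> \<longleftrightarrow>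
     compact_topological_group G T \<and>
     space \<mu> = carrier G \<and> sets \<mu> = sets (borel_of_top T) \<and>
     0 < emeasure \<mu> (carrier G) \<and> emeasure \<mu> (carrier G) < \<infinity> \<and>
     (\<forall>A\<in>sets \<mu>. emeasure \<mu> A = (INF U\<in>{U. openin T U \<and> A \<subseteq> U}. emeasure \<mu> U)) \<and>
     (\<forall>U. openin T U \<longrightarrow> emeasure \<mu> U = (SUP K\<in>{K. compactin T K \<and> K \<subseteq> U}. emeasure \<mu> K)) \<and>
     (\<forall>g\<in>carrier G. \<forall>A\<in>sets \<mu>. emeasure \<mu> ((\<lambda>x. g \<otimes>\<^bsub>G\<^esub> x) ` A) = emeasure \<mu> A)"

definition lp_norm :: "'w measure \<Rightarrow> real \<Rightarrow> ('w \<Rightarrow> real) \<Rightarrow> ennreal" where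
  "lp_norm M p X =
     (let E = (\<integral>\<^sup>+ \<omega>. ennreal (\<bar>X \<omega>\<bar> powr p) \<partial>M)
      in if E = \<infinity> then \<infinity> else ennreal (enn2real E powr (1 / p)))"

end

theory Submission
  imports Defs
begin


lemma powr_tangent:
  fixes a t p :: real
  assumes "0 \<le> t" "0 < a" "1 \<le> p"
  shows "a powr p + p * a powr (p - 1) * (t - a) \<le> t powr p"
proof (cases "t = 0")
  case True
  have "a powr (p - 1) * a = a powr p" using assms by (simp add: powr_diff)
  then have "a powr p + p * a powr (p - 1) * (t - a) = a powr p * (1 - p)" using True by (simp add: algebra_simps)
  also have "\<dots> \<le> 0" using assms by (simp add: mult_nonneg_nonpos)
  finally show ?thesis using True by simp
next
  case False
  have "p * a powr (p - 1) * (t - a) \<le> t powr p - a powr p"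
    using assms False
    by (intro convex_on_imp_above_tangent[where A = "{0<..}"] powr_convex)
       (auto intro!: derivative_eq_intros simp: interior_open)
  then show ?thesis by simp
qed



lemma holder_ind:
  fixes \<nu> :: "'a measure" and f :: "'a \<Rightarrow> real"
  assumes fin: "finite_measure \<nu>" and S: "S \<in> sets \<nu>" and f: "f \<in> borel_measurable \<nu>" and p: "1 \<le> p"
  shows "ennreal (\<bar>\<integral>x. f x * indicator S x \<partial>\<nu>\<bar> powr p)
     \<le> ennreal (measure \<nu> S powr (p - 1)) * (\<integral>\<^sup>+x. ennreal (\<bar>f x\<bar> powr p * indicator S x) \<partial>\<nu>)"
proof -
  interpret finite_measure \<nu> by fact
  define c where "c = measure \<nu> S"
  define N where "N = (\<integral>\<^sup>+x. ennreal (\<bar>f x\<bar> powr p * indicator S x) \<partial>\<nu>)"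
  have c0: "0 \<le> c" unfolding c_def by simp
  consider (ni) "\<not> integrable \<nu> (\<lambda>x. f x * indicator S x)"
    | (cz) "c = 0"
    | (inf) "c > 0" "N = \<infinity>"
    | (main) "integrable \<nu> (\<lambda>x. f x * indicator S x)" "c > 0" "N \<noteq> \<infinity>"
    using c0 by force
  then show ?thesis
  proof cases
    case ni
    then show ?thesis using p by (simp add: not_integrable_integral_eq)
  next
    case cz
    have "S \<in> null_sets \<nu>" using cz S unfolding c_def by (simp add: emeasure_eq_measure null_sets_def)
    then have "AE x in \<nu>. x \<notin> S" by (rule AE_not_in)
    then have "(\<integral>x. f x * indicator S x \<partial>\<nu>) = (\<integral>x. 0 \<partial>\<nu>)"
      using f S by (intro integral_cong_AE) (auto elim!: eventually_mono)
    then show ?thesis using p by simp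
  next
    case inf
    then have "ennreal (measure \<nu> S powr (p - 1)) \<noteq> 0" unfolding c_def by simp
    then show ?thesis using inf unfolding N_def by (simp add: ennreal_mult_top)
  next
    case main
    define g where "g x = \<bar>f x\<bar> * indicator S x" for x
    define h where "h x = \<bar>f x\<bar> powr p * indicator S x" for x
    have gi: "integrable \<nu> g"
      using integrable_abs[OF main(1)] unfolding g_def by (simp add: abs_mult)
    have hm: "h \<in> borel_measurable \<nu>" unfolding h_def using f S by measurable
    have hi: "integrable \<nu> h"
      using hm main(3) unfolding N_def h_def
      by (intro integrableI_nonneg) (auto simp: top.not_eq_extremum)
    have Nh: "N = ennreal (\<integral>x. h x \<partial>\<nu>)"
    proof -
      have "(\<integral>\<^sup>+x. ennreal (h x) \<partial>\<nu>) = ennreal (\<integral>x. h x \<partial>\<nu>)"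
        by (intro nn_integral_eq_integral[OF hi]) (auto simp: h_def)
      then show ?thesis unfolding N_def h_def .
    qed
    have bound: "\<bar>\<integral>x. f x * indicator S x \<partial>\<nu>\<bar> \<le> (\<integral>x. g x \<partial>\<nu>)"
      using integral_abs_bound[of \<nu> "\<lambda>x. f x * indicator S x"] unfolding g_def by (simp add: abs_mult)
    define a where "a = (\<integral>x. g x \<partial>\<nu>) / c"
    have a0: "0 \<le> a" unfolding a_def using main(2) by (auto intro!: integral_nonneg_AE simp: g_def)
    have ga: "(\<integral>x. g x \<partial>\<nu>) = c * a" unfolding a_def using main(2) by simp
    have key: "\<bar>\<integral>x. f x * indicator S x \<partial>\<nu>\<bar> powr p \<le> c powr (p - 1) * (\<integral>x. h x \<partial>\<nu>)"
    proof (cases "a = 0")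
      case True
      then show ?thesis using bound ga p hi
        by (auto intro!: mult_nonneg_nonneg integral_nonneg_AE simp: h_def)
    next
      case False
      then have apos: "0 < a" using a0 by simp
      define k1 where "k1 = a powr p - p * a powr (p - 1) * a"
      define k2 where "k2 = p * a powr (p - 1)"
      have pw: "k1 * indicator S x + k2 * g x \<le> h x" for x
        using powr_tangent[of "\<bar>f x\<bar>" a p] apos p
        by (auto simp: k1_def k2_def g_def h_def indicator_def algebra_simps)
      have "(\<integral>x. k1 * indicator S x + k2 * g x \<partial>\<nu>) \<le> (\<integral>x. h x \<partial>\<nu>)"
        using pw S gi hi by (intro integral_mono Bochner_Integration.integrable_add integrable_mult_right integrable_real_indicator) (auto simp: emeasure_eq_measure)
      moreover have "(\<integral>x. k1 * indicator S x + k2 * g x \<partial>\<nu>) = k1 * c + k2 * (c * a)"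
      proof -
        have ii: "integrable \<nu> (\<lambda>x. k1 * indicator S x :: real)"
          using S by (intro integrable_mult_right integrable_real_indicator) (auto simp: emeasure_eq_measure)
        have "(\<integral>x. k1 * indicator S x + k2 * g x \<partial>\<nu>) = (\<integral>x. k1 * indicator S x \<partial>\<nu>) + (\<integral>x. k2 * g x \<partial>\<nu>)"
          using ii gi by (intro Bochner_Integration.integral_add) auto
        also have "\<dots> = k1 * c + k2 * (c * a)"
          using S ga unfolding c_def by simp
        finally show ?thesis .
      qed
      moreover have "k1 * c + k2 * (c * a) = c * a powr p"
        unfolding k1_def k2_def by (simp add: algebra_simps)
      ultimately have hb: "c * a powr p \<le> (\<integral>x. h x \<partial>\<nu>)" by simp
      have "\<bar>\<integral>x. f x * indicator S x \<partial>\<nu>\<bar> powr p \<le> (c * a) powr p"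
        using bound ga p by (intro powr_mono2) auto
      also have "\<dots> = c powr (p - 1) * (c * a powr p)"
        using main(2) a0 by (simp add: powr_mult powr_diff)
      also have "\<dots> \<le> c powr (p - 1) * (\<integral>x. h x \<partial>\<nu>)"
        using hb by (intro mult_left_mono) auto
      finally show ?thesis .
    qed
    have "ennreal (\<bar>\<integral>x. f x * indicator S x \<partial>\<nu>\<bar> powr p) \<le> ennreal (c powr (p - 1) * (\<integral>x. h x \<partial>\<nu>))"
      using key by (rule ennreal_leI)
    also have "\<dots> = ennreal (c powr (p - 1)) * N"
      unfolding Nh by (rule ennreal_mult) (auto intro!: integral_nonneg_AE simp: h_def)
    finally show ?thesis unfolding c_def N_def .
  qed
qed



lemma haar_facts:
  assumes "left_haar_measure G T \<mu>"
  shows haar_space: "space \<mu> = carrier G"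
    and haar_sets: "sets \<mu> = sets (borel_of_top T)"
    and haar_ctg: "compact_topological_group G T"
    and haar_fin: "emeasure \<mu> (carrier G) < \<infinity>"
    and haar_inv: "\<And>g A. g \<in> carrier G \<Longrightarrow> A \<in> sets \<mu> \<Longrightarrow> emeasure \<mu> ((\<lambda>x. g \<otimes>\<^bsub>G\<^esub> x) ` A) = emeasure \<mu> A"
  using assms unfolding left_haar_measure_def by blast+

lemma ctg_facts:
  assumes "compact_topological_group G T"
  shows ctg_group: "group G"
    and ctg_top: "topspace T = carrier G"
    and ctg_mult: "continuous_map (prod_topology T T) T (\<lambda>(x, y). x \<otimes>\<^bsub>G\<^esub> y)"
  using assms unfolding compact_topological_group_def by blast+

lemma haar_group: "left_haar_measure G T \<mu> \<Longrightarrow> group G"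
  by (rule ctg_group[OF haar_ctg])

lemma haar_translate_meas:
  assumes H: "left_haar_measure G T \<mu>" and h: "h \<in> carrier G"
  shows "(\<lambda>x. h \<otimes>\<^bsub>G\<^esub> x) \<in> \<mu> \<rightarrow>\<^sub>M \<mu>"
proof -
  have ctg: "compact_topological_group G T" by (rule haar_ctg[OF H])
  have st: "sets \<mu> = sets (borel_of_top T)" by (rule haar_sets[OF H])
  have tp: "topspace T = carrier G" by (rule ctg_top[OF ctg])
  have cm: "continuous_map (prod_topology T T) T (\<lambda>(x, y). x \<otimes>\<^bsub>G\<^esub> y)" by (rule ctg_mult[OF ctg])
  have pc: "continuous_map T (prod_topology T T) (\<lambda>x. (h, x))"
    using h tp by (auto simp: continuous_map_pairwise o_def continuous_map_const)
  have lc: "continuous_map T T (\<lambda>x. h \<otimes>\<^bsub>G\<^esub> x)"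
    using continuous_map_compose[OF pc cm] by (simp add: o_def)
  have sub: "{U. openin T U} \<subseteq> Pow (topspace T)" by (auto dest: openin_subset)
  have "(\<lambda>x. h \<otimes>\<^bsub>G\<^esub> x) \<in> borel_of_top T \<rightarrow>\<^sub>M borel_of_top T"
    unfolding borel_of_top_def
  proof (rule measurable_measure_of[OF sub])
    show "(\<lambda>x. h \<otimes>\<^bsub>G\<^esub> x) \<in> space (measure_of (topspace T) {U. openin T U} (\<lambda>_. 0)) \<rightarrow> topspace T"
      using lc sub by (auto simp: space_measure_of_conv continuous_map_def)
    fix U assume "U \<in> {U. openin T U}"
    then have "openin T {x \<in> topspace T. h \<otimes>\<^bsub>G\<^esub> x \<in> U}"
      using lc by (auto intro: openin_continuous_map_preimage)
    moreover have "(\<lambda>x. h \<otimes>\<^bsub>G\<^esub> x) -` U \<inter> space (measure_of (topspace T) {U. openin T U} (\<lambda>_. 0))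
        = {x \<in> topspace T. h \<otimes>\<^bsub>G\<^esub> x \<in> U}"
      using sub by (auto simp: space_measure_of_conv)
    ultimately show "(\<lambda>x. h \<otimes>\<^bsub>G\<^esub> x) -` U \<inter> space (measure_of (topspace T) {U. openin T U} (\<lambda>_. 0))
        \<in> sets (measure_of (topspace T) {U. openin T U} (\<lambda>_. 0))"
      using sub by (auto simp: sets_measure_of_conv intro: sigma_sets.Basic)
  qed
  then show ?thesis using measurable_cong_sets[OF st st] by simp
qed

lemma haar_translate_distr:
  assumes H: "left_haar_measure G T \<mu>" and h: "h \<in> carrier G"
  shows "distr \<mu> \<mu> (\<lambda>x. h \<otimes>\<^bsub>G\<^esub> x) = \<mu>"
proof -
  have sp: "space \<mu> = carrier G" by (rule haar_space[OF H])
  have grp: "group G" using H by (rule haar_group)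
  interpret group G by fact
  have ih: "inv\<^bsub>G\<^esub> h \<in> carrier G" using h by simp
  have em: "emeasure (distr \<mu> \<mu> (\<lambda>x. h \<otimes>\<^bsub>G\<^esub> x)) A = emeasure \<mu> A" if A: "A \<in> sets \<mu>" for A
  proof -
    have Asub: "A \<subseteq> carrier G" using A sets.sets_into_space sp by blast
    have eq: "(\<lambda>x. h \<otimes>\<^bsub>G\<^esub> x) -` A \<inter> space \<mu> = (\<lambda>x. inv\<^bsub>G\<^esub> h \<otimes>\<^bsub>G\<^esub> x) ` A"
    proof (rule equalityI; rule subsetI)
      fix x assume "x \<in> (\<lambda>x. h \<otimes>\<^bsub>G\<^esub> x) -` A \<inter> space \<mu>"
      then show "x \<in> (\<lambda>x. inv\<^bsub>G\<^esub> h \<otimes>\<^bsub>G\<^esub> x) ` A"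
        using h sp by (intro image_eqI[of _ _ "h \<otimes>\<^bsub>G\<^esub> x"]) (auto simp: m_assoc[symmetric])
    next
      fix x assume "x \<in> (\<lambda>x. inv\<^bsub>G\<^esub> h \<otimes>\<^bsub>G\<^esub> x) ` A"
      then obtain y where y: "y \<in> A" "x = inv\<^bsub>G\<^esub> h \<otimes>\<^bsub>G\<^esub> y" by auto
      then show "x \<in> (\<lambda>x. h \<otimes>\<^bsub>G\<^esub> x) -` A \<inter> space \<mu>"
        using h sp Asub by (auto simp: m_assoc[symmetric])
    qed
    have "emeasure (distr \<mu> \<mu> (\<lambda>x. h \<otimes>\<^bsub>G\<^esub> x)) A = emeasure \<mu> ((\<lambda>x. h \<otimes>\<^bsub>G\<^esub> x) -` A \<inter> space \<mu>)"
      using A haar_translate_meas[OF H h] by (rule_tac emeasure_distr) auto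
    also have "\<dots> = emeasure \<mu> A"
      unfolding eq using haar_inv[OF H ih A] .
    finally show ?thesis .
  qed
  show ?thesis
  proof (rule measure_eqI)
    show "sets (distr \<mu> \<mu> (\<lambda>x. h \<otimes>\<^bsub>G\<^esub> x)) = sets \<mu>" by simp
    fix A assume "A \<in> sets (distr \<mu> \<mu> (\<lambda>x. h \<otimes>\<^bsub>G\<^esub> x))"
    then have "A \<in> sets \<mu>" by simp
    then show "emeasure (distr \<mu> \<mu> (\<lambda>x. h \<otimes>\<^bsub>G\<^esub> x)) A = emeasure \<mu> A"
      by (rule em)
  qed
qed



lemma distr_PiM_coordwise:
  assumes fin: "finite I" and fm: "\<And>i. i \<in> I \<Longrightarrow> finite_measure (M i)"
    and meas: "\<And>i. i \<in> I \<Longrightarrow> f i \<in> M i \<rightarrow>\<^sub>M M i"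
    and d: "\<And>i. i \<in> I \<Longrightarrow> distr (M i) (M i) (f i) = M i"
  shows "distr (PiM I M) (PiM I M) (\<lambda>x. restrict (\<lambda>i. f i (x i)) I) = PiM I M"
proof -
  define N where "N i = (if i \<in> I then M i else count_space {})" for i
  have PN: "PiM I M = PiM I N" by (intro PiM_cong) (auto simp: N_def)
  have "finite_measure (N i)" for i
    using fm by (auto simp: N_def intro: finite_measure_count_space)
  then interpret product_sigma_finite N
    by (auto simp: product_sigma_finite_def intro: finite_measure.sigma_finite_measure)
  have measN: "\<And>i. i \<in> I \<Longrightarrow> f i \<in> N i \<rightarrow>\<^sub>M N i" using meas by (simp add: N_def)
  have tm: "(\<lambda>x. restrict (\<lambda>i. f i (x i)) I) \<in> PiM I N \<rightarrow>\<^sub>M PiM I N"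
  proof (intro measurable_restrict)
    fix i assume "i \<in> I"
    then show "(\<lambda>x. f i (x i)) \<in> PiM I N \<rightarrow>\<^sub>M N i"
      using measN by (intro measurable_compose[OF measurable_component_singleton[of i I N] measN]) auto
  qed
  have "distr (PiM I N) (PiM I N) (\<lambda>x. restrict (\<lambda>i. f i (x i)) I) = PiM I N"
  proof (rule PiM_eqI[OF fin])
    show "sets (distr (PiM I N) (PiM I N) (\<lambda>x. restrict (\<lambda>i. f i (x i)) I)) = sets (PiM I N)" by simp
    fix A assume A: "\<And>i. i \<in> I \<Longrightarrow> A i \<in> sets (N i)"
    have "emeasure (distr (PiM I N) (PiM I N) (\<lambda>x. restrict (\<lambda>i. f i (x i)) I)) (PiE I A)
        = emeasure (PiM I N) ((\<lambda>x. restrict (\<lambda>i. f i (x i)) I) -` PiE I A \<inter> space (PiM I N))"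
      using A fin tm by (intro emeasure_distr) (auto intro: sets_PiM_I_finite)
    also have "(\<lambda>x. restrict (\<lambda>i. f i (x i)) I) -` PiE I A \<inter> space (PiM I N)
        = PiE I (\<lambda>i. f i -` A i \<inter> space (N i))"
      by (auto simp: space_PiM restrict_PiE_iff PiE_iff)
    also have "emeasure (PiM I N) (PiE I (\<lambda>i. f i -` A i \<inter> space (N i)))
        = (\<Prod>i\<in>I. emeasure (N i) (f i -` A i \<inter> space (N i)))"
      using A measN by (intro emeasure_PiM fin) auto
    also have "\<dots> = (\<Prod>i\<in>I. emeasure (distr (N i) (N i) (f i)) (A i))"
      using A measN by (intro prod.cong emeasure_distr [symmetric]) auto
    also have "\<dots> = (\<Prod>i\<in>I. emeasure (N i) (A i))"
      using d by (intro prod.cong) (auto simp: N_def)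
    finally show "emeasure (distr (PiM I N) (PiM I N) (\<lambda>x. restrict (\<lambda>i. f i (x i)) I)) (PiE I A)
        = (\<Prod>i\<in>I. emeasure (N i) (A i))" .
  qed
  then show ?thesis using PN by simp
qed

lemma finite_measure_PiM':
  assumes fin: "finite I" and fm: "\<And>i. i \<in> I \<Longrightarrow> finite_measure (M i)"
  shows "finite_measure (PiM I M)"
proof -
  define N where "N i = (if i \<in> I then M i else count_space {})" for i
  have PN: "PiM I M = PiM I N" by (intro PiM_cong) (auto simp: N_def)
  have "finite_measure (N i)" for i
    using fm by (auto simp: N_def intro: finite_measure_count_space)
  then interpret product_sigma_finite N
    by (auto simp: product_sigma_finite_def intro: finite_measure.sigma_finite_measure)
  have "emeasure (PiM I N) (space (PiM I N)) = (\<Prod>i\<in>I. emeasure (N i) (space (N i)))"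
    unfolding space_PiM using fin by (intro emeasure_PiM) auto
  also have "\<dots> \<noteq> \<infinity>"
    using \<open>\<And>i. finite_measure (N i)\<close> by (auto simp: ennreal_prod_eq_top finite_measure.emeasure_finite)
  finally show ?thesis unfolding PN by (rule finite_measureI)
qed



lemma grp_cancel:
  assumes "group G" "a \<in> carrier G" "b \<in> carrier G"
  shows "a \<otimes>\<^bsub>G\<^esub> (inv\<^bsub>G\<^esub> a \<otimes>\<^bsub>G\<^esub> b) = b"
proof -
  interpret group G by fact
  show ?thesis using assms by (simp add: m_assoc[symmetric])
qed

theorem theorem12p4:
  fixes M :: "'w measure"
    and m n :: nat
    and q :: "nat \<Rightarrow> nat"
    and I :: "nat \<Rightarrow> 'v::real_vector \<Rightarrow> 'w \<Rightarrow> real"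
    and G :: "nat \<Rightarrow> 'g monoid"
    and T :: "nat \<Rightarrow> 'g topology"
    and \<mu> :: "nat \<Rightarrow> 'g measure"
    and e :: "nat \<Rightarrow> nat \<Rightarrow> nat \<Rightarrow> 'g \<Rightarrow> 'v"
    and A :: "nat \<Rightarrow> (nat \<Rightarrow> nat) \<Rightarrow> (nat \<Rightarrow> 'g) \<Rightarrow> 'w \<Rightarrow> real"
    and g :: "nat \<Rightarrow> nat \<Rightarrow> nat \<Rightarrow> 'g"
    and chi :: "nat \<Rightarrow> nat \<Rightarrow> 'g set"
    and H Hring :: "(nat \<Rightarrow> 'g) \<Rightarrow> 'w \<Rightarrow> real"
    and HH :: "'w \<Rightarrow> real"
    and p :: real
  assumes M: "prob_space M"
    and I_linear: "\<And>k a b u v \<omega>. I k (a *\<^sub>R u + b *\<^sub>R v) \<omega> = a * I k u \<omega> + b * I k v \<omega>"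
    and haar: "\<And>i. i < m \<Longrightarrow> left_haar_measure (G i) (T i) (\<mu> i)"
    and A_meas: "\<And>js. js \<in> PiE {..<m} (\<lambda>_. {1..n}) \<Longrightarrow>
        (\<lambda>(\<omega>, x). A n js x \<omega>) \<in> borel_measurable (M \<Otimes>\<^sub>M PiM {..<m} \<mu>)"
    and I_meas: "\<And>i j. i < m \<Longrightarrow> j \<in> {1..n} \<Longrightarrow>
        (\<lambda>(\<omega>, x). I (q i) (e i n j x) \<omega>) \<in> borel_measurable (M \<Otimes>\<^sub>M \<mu> i)"
    and integrable: "\<And>js. js \<in> PiE {..<m} (\<lambda>_. {1..n}) \<Longrightarrow>
        AE \<omega> in M. integrable (PiM {..<m} \<mu>)
          (\<lambda>x. A n js x \<omega> * (\<Prod>i<m. I (q i) (e i n (js i) (x i)) \<omega>))"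
    and HH_def: "\<And>\<omega>. HH \<omega> = (\<integral>x. (\<Sum>js\<in>PiE {..<m} (\<lambda>_. {1..n}).
          A n js x \<omega> * (\<Prod>i<m. I (q i) (e i n (js i) (x i)) \<omega>)) \<partial>PiM {..<m} \<mu>)"
    and g_in: "\<And>i j. i < m \<Longrightarrow> j \<in> {1..n} \<Longrightarrow> g i n j \<in> carrier (G i)"
    and chi_meas: "\<And>i. i < m \<Longrightarrow> chi i n \<in> sets (\<mu> i)"
    and localization: "\<And>i j x. i < m \<Longrightarrow> j \<in> {1..n} \<Longrightarrow> x \<in> carrier (G i) \<Longrightarrow>
        e i n j x = indicator (chi i n) (g i n j \<otimes>\<^bsub>G i\<^esub> x) *\<^sub>R e i n j x"
    and Hring_def: "\<And>x \<omega>. Hring x \<omega> = (\<Sum>js\<in>PiE {..<m} (\<lambda>_. {1..n}).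
          A n js (restrict (\<lambda>i. inv\<^bsub>G i\<^esub> (g i n (js i)) \<otimes>\<^bsub>G i\<^esub> x i) {..<m}) \<omega> *
          (\<Prod>i<m. I (q i) (e i n (js i) (inv\<^bsub>G i\<^esub> (g i n (js i)) \<otimes>\<^bsub>G i\<^esub> x i)) \<omega>))"
    and p: "1 \<le> p"
  shows "(AE \<omega> in M. HH \<omega> =
            (\<integral>x. Hring x \<omega> * (\<Prod>i<m. indicator (chi i n) (x i)) \<partial>PiM {..<m} \<mu>))
       \<and> lp_norm M p HH \<le>
            (SUP x\<in>space (PiM {..<m} \<mu>). lp_norm M p (Hring x)) *
            emeasure (PiM {..<m} \<mu>) (PiE {..<m} (\<lambda>i. chi i n))"
proof -
  let ?\<nu> = "PiM {..<m} \<mu>"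
  define J where "J = PiE {..<m} (\<lambda>_. {1..n::nat})"
  have finJ: "finite J" unfolding J_def by (simp add: finite_PiE)
  have grp: "\<And>i. i < m \<Longrightarrow> group (G i)" using haar haar_group by blast
  have fmi: "\<And>i. i < m \<Longrightarrow> finite_measure (\<mu> i)"
  proof -
    fix i assume "i < m"
    then have hi: "left_haar_measure (G i) (T i) (\<mu> i)" by (rule haar)
    show "finite_measure (\<mu> i)"
      using haar_space[OF hi] haar_fin[OF hi] by (intro finite_measureI) (simp add: top.not_eq_extremum)
  qed
  have fmnu: "finite_measure ?\<nu>" by (rule finite_measure_PiM') (auto intro: fmi)
  interpret nu: finite_measure ?\<nu> by (rule fmnu)
  interpret Mp: prob_space M by (rule M)
  interpret PS: pair_sigma_finite M ?\<nu>
    unfolding pair_sigma_finite_def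
    using prob_space_imp_sigma_finite[OF M] fmnu finite_measure.sigma_finite_measure by blast
  define hinv where "hinv i j = inv\<^bsub>G i\<^esub> (g i n j)" for i j
  have hinv_in: "\<And>i j. i < m \<Longrightarrow> j \<in> {1..n} \<Longrightarrow> hinv i j \<in> carrier (G i)"
    unfolding hinv_def using g_in grp by (simp add: group.inv_closed)
  have jsin: "\<And>js i. js \<in> J \<Longrightarrow> i < m \<Longrightarrow> js i \<in> {1..n}" unfolding J_def by (auto simp: PiE_iff)
  define \<tau> where "\<tau> js = (\<lambda>x. restrict (\<lambda>i. hinv i (js i) \<otimes>\<^bsub>G i\<^esub> x i) {..<m})" for js
  have trm: "\<And>js i. js \<in> J \<Longrightarrow> i < m \<Longrightarrow> (\<lambda>y. hinv i (js i) \<otimes>\<^bsub>G i\<^esub> y) \<in> \<mu> i \<rightarrow>\<^sub>M \<mu> i"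
    by (rule haar_translate_meas[OF haar hinv_in[OF _ jsin]])
  have trd: "\<And>js i. js \<in> J \<Longrightarrow> i < m \<Longrightarrow> distr (\<mu> i) (\<mu> i) (\<lambda>y. hinv i (js i) \<otimes>\<^bsub>G i\<^esub> y) = \<mu> i"
    by (rule haar_translate_distr[OF haar hinv_in[OF _ jsin]])
  have \<tau>m: "\<And>js. js \<in> J \<Longrightarrow> \<tau> js \<in> ?\<nu> \<rightarrow>\<^sub>M ?\<nu>"
  proof -
    fix js assume js: "js \<in> J"
    show "\<tau> js \<in> ?\<nu> \<rightarrow>\<^sub>M ?\<nu>"
      unfolding \<tau>_def
    proof (intro measurable_restrict)
      fix i assume i: "i \<in> {..<m}"
      show "(\<lambda>x. hinv i (js i) \<otimes>\<^bsub>G i\<^esub> x i) \<in> ?\<nu> \<rightarrow>\<^sub>M \<mu> i"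
        using i trm[OF js] by (intro measurable_compose[OF measurable_component_singleton[of i "{..<m}" \<mu>]]) auto
    qed
  qed
  have \<tau>d: "\<And>js. js \<in> J \<Longrightarrow> distr ?\<nu> ?\<nu> (\<tau> js) = ?\<nu>"
  proof -
    fix js assume js: "js \<in> J"
    have "distr ?\<nu> ?\<nu> (\<lambda>x. restrict (\<lambda>i. (\<lambda>y. hinv i (js i) \<otimes>\<^bsub>G i\<^esub> y) (x i)) {..<m}) = ?\<nu>"
      using js fmi trm trd by (intro distr_PiM_coordwise) auto
    then show "distr ?\<nu> ?\<nu> (\<tau> js) = ?\<nu>" unfolding \<tau>_def by simp
  qed
  define TT where "TT js x \<omega> = A n js x \<omega> * (\<Prod>i<m. I (q i) (e i n (js i) (x i)) \<omega>)" for js x \<omega>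
  have Tjoint: "\<And>js \<phi>. js \<in> J \<Longrightarrow> \<phi> \<in> ?\<nu> \<rightarrow>\<^sub>M ?\<nu> \<Longrightarrow>
      (\<lambda>z. TT js (\<phi> (snd z)) (fst z)) \<in> borel_measurable (M \<Otimes>\<^sub>M ?\<nu>)"
  proof -
    fix js \<phi> assume js: "js \<in> J" and \<phi>: "\<phi> \<in> ?\<nu> \<rightarrow>\<^sub>M ?\<nu>"
    have pm: "(\<lambda>z. (fst z, \<phi> (snd z))) \<in> M \<Otimes>\<^sub>M ?\<nu> \<rightarrow>\<^sub>M M \<Otimes>\<^sub>M ?\<nu>"
      using \<phi> by measurable
    have Am: "(\<lambda>z. A n js (\<phi> (snd z)) (fst z)) \<in> borel_measurable (M \<Otimes>\<^sub>M ?\<nu>)"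
      using measurable_compose[OF pm A_meas[OF js[unfolded J_def]]] by simp
    have Im: "(\<lambda>z. I (q i) (e i n (js i) (\<phi> (snd z) i)) (fst z)) \<in> borel_measurable (M \<Otimes>\<^sub>M ?\<nu>)"
      if i: "i \<in> {..<m}" for i
    proof -
      have pm2: "(\<lambda>z. (fst z, \<phi> (snd z) i)) \<in> M \<Otimes>\<^sub>M ?\<nu> \<rightarrow>\<^sub>M M \<Otimes>\<^sub>M \<mu> i"
        using \<phi> i by measurable
      show ?thesis
        using measurable_compose[OF pm2 I_meas[of i "js i"]] i jsin[OF js] by simp
    qed
    show "(\<lambda>z. TT js (\<phi> (snd z)) (fst z)) \<in> borel_measurable (M \<Otimes>\<^sub>M ?\<nu>)"
      unfolding TT_def using Am Im by (intro borel_measurable_times borel_measurable_prod) auto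
  qed
  have T\<omega>: "\<And>js \<omega>. js \<in> J \<Longrightarrow> \<omega> \<in> space M \<Longrightarrow> (\<lambda>x. TT js x \<omega>) \<in> borel_measurable ?\<nu>"
    using measurable_Pair2[OF Tjoint[OF _ measurable_ident]] by simp
  have Hring_eq: "\<And>x \<omega>. Hring x \<omega> = (\<Sum>js\<in>J. TT js (\<tau> js x) \<omega>)"
    unfolding Hring_def J_def TT_def \<tau>_def hinv_def
    by (intro sum.cong refl arg_cong2[where f="(*)"] prod.cong) auto
  have Hjoint: "(\<lambda>z. Hring (snd z) (fst z)) \<in> borel_measurable (M \<Otimes>\<^sub>M ?\<nu>)"
    unfolding Hring_eq using Tjoint \<tau>m by (intro borel_measurable_sum) auto
  have H\<omega>: "\<And>\<omega>. \<omega> \<in> space M \<Longrightarrow> (\<lambda>x. Hring x \<omega>) \<in> borel_measurable ?\<nu>"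
    using measurable_Pair2[OF Hjoint] by simp
  have Hx: "\<And>x. x \<in> space ?\<nu> \<Longrightarrow> (\<lambda>\<omega>. Hring x \<omega>) \<in> borel_measurable M"
    using measurable_Pair1[OF Hjoint] by simp
  define S where "S = PiE {..<m} (\<lambda>i. chi i n)"
  have S: "S \<in> sets ?\<nu>" unfolding S_def using chi_meas by (intro sets_PiM_I_finite) auto
  have ind: "\<And>x. x \<in> space ?\<nu> \<Longrightarrow> (\<Prod>i<m. indicator (chi i n) (x i)) = (indicator S x :: real)"
  proof -
    fix x assume x: "x \<in> space ?\<nu>"
    then have ext: "x \<in> extensional {..<m}" by (simp add: space_PiM PiE_iff)
    show "(\<Prod>i<m. indicator (chi i n) (x i)) = (indicator S x :: real)"
    proof (cases "x \<in> S")
      case True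
      then have "\<forall>i<m. x i \<in> chi i n" by (simp add: S_def PiE_iff)
      then have "(\<Prod>i<m. indicator (chi i n) (x i)) = (\<Prod>i<m. 1 :: real)"
        by (intro prod.cong) auto
      then show ?thesis using True by simp
    next
      case False
      then obtain i where i: "i < m" "x i \<notin> chi i n" using ext by (auto simp: S_def PiE_iff)
      then have "(\<Prod>i<m. indicator (chi i n) (x i)) = (0::real)"
        by (intro prod_zero) (auto intro!: bexI[of _ i])
      then show ?thesis using False by simp
    qed
  qed
  have I0: "\<And>k \<omega>. I k 0 \<omega> = 0" using I_linear[of _ 0 0 0 0] by simp
  have vanish: "\<And>x \<omega>. x \<in> space ?\<nu> \<Longrightarrow> Hring x \<omega> * indicator S x = Hring x \<omega>"
  proof -
    fix x \<omega> assume x: "x \<in> space ?\<nu>"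
    then have ext: "x \<in> extensional {..<m}" by (simp add: space_PiM PiE_iff)
    show "Hring x \<omega> * indicator S x = Hring x \<omega>"
    proof (cases "x \<in> S")
      case True
      then show ?thesis by simp
    next
      case False
      then obtain i0 where i0: "i0 < m" "x i0 \<notin> chi i0 n" using ext by (auto simp: S_def PiE_iff)
      have xc: "x i0 \<in> carrier (G i0)"
        using x i0 haar_space[OF haar[OF i0(1)]] by (auto simp: space_PiM PiE_iff)
      have "Hring x \<omega> = 0"
        unfolding Hring_def
      proof (intro sum.neutral ballI)
        fix js assume js: "js \<in> PiE {..<m} (\<lambda>_. {1..n})"
        then have j: "js i0 \<in> {1..n}" using i0 by (auto simp: PiE_iff)
        define y where "y = inv\<^bsub>G i0\<^esub> (g i0 n (js i0)) \<otimes>\<^bsub>G i0\<^esub> x i0"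
        have gy: "g i0 n (js i0) \<otimes>\<^bsub>G i0\<^esub> y = x i0"
          unfolding y_def using grp_cancel[OF grp[OF i0(1)] g_in[OF i0(1) j] xc] .
        have yc: "y \<in> carrier (G i0)"
          unfolding y_def using grp[OF i0(1)] g_in[OF i0(1) j] xc
          by (simp add: group.inv_closed monoid.m_closed group.is_monoid)
        have "e i0 n (js i0) y = 0"
          using localization[OF i0(1) j yc] i0(2) gy by simp
        then have "I (q i0) (e i0 n (js i0) y) \<omega> = 0" using I0 by simp
        then have "(\<Prod>i<m. I (q i) (e i n (js i) (inv\<^bsub>G i\<^esub> (g i n (js i)) \<otimes>\<^bsub>G i\<^esub> x i)) \<omega>) = 0"
          using i0(1) unfolding y_def by (intro prod_zero) (auto intro!: bexI[of _ i0])
        then show "A n js (restrict (\<lambda>i. inv\<^bsub>G i\<^esub> (g i n (js i)) \<otimes>\<^bsub>G i\<^esub> x i) {..<m}) \<omega> *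
          (\<Prod>i<m. I (q i) (e i n (js i) (inv\<^bsub>G i\<^esub> (g i n (js i)) \<otimes>\<^bsub>G i\<^esub> x i)) \<omega>) = 0"
          by simp
      qed
      then show ?thesis by simp
    qed
  qed
  have AEint: "AE \<omega> in M. \<forall>js\<in>J. integrable ?\<nu> (\<lambda>x. TT js x \<omega>)"
    using integrable finJ unfolding J_def TT_def by (intro eventually_ball_finite ballI) auto
  have conj1: "AE \<omega> in M. HH \<omega> = (\<integral>x. Hring x \<omega> * (\<Prod>i<m. indicator (chi i n) (x i)) \<partial>?\<nu>)"
    using AEint
  proof (rule AE_mp, intro AE_I2 impI)
    fix \<omega> assume \<omega>: "\<omega> \<in> space M" and int: "\<forall>js\<in>J. integrable ?\<nu> (\<lambda>x. TT js x \<omega>)"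
    have int2: "integrable ?\<nu> (\<lambda>x. TT js (\<tau> js x) \<omega>)" if js: "js \<in> J" for js
      using integrable_distr_eq[OF \<tau>m[OF js] T\<omega>[OF js \<omega>]] \<tau>d[OF js] int js by simp
    have "HH \<omega> = (\<integral>x. (\<Sum>js\<in>J. TT js x \<omega>) \<partial>?\<nu>)" by (simp add: HH_def J_def TT_def)
    also have "\<dots> = (\<Sum>js\<in>J. \<integral>x. TT js x \<omega> \<partial>?\<nu>)" using int by (intro Bochner_Integration.integral_sum[where I=J and f="\<lambda>js x. TT js x \<omega>"]) auto
    also have "\<dots> = (\<Sum>js\<in>J. \<integral>x. TT js (\<tau> js x) \<omega> \<partial>?\<nu>)"
    proof (intro sum.cong refl)
      fix js assume js: "js \<in> J"
      have "(\<integral>x. TT js x \<omega> \<partial>?\<nu>) = (\<integral>x. TT js x \<omega> \<partial>(distr ?\<nu> ?\<nu> (\<tau> js)))" using \<tau>d[OF js] by simp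
      also have "\<dots> = (\<integral>x. TT js (\<tau> js x) \<omega> \<partial>?\<nu>)" by (rule integral_distr[OF \<tau>m[OF js] T\<omega>[OF js \<omega>]])
      finally show "(\<integral>x. TT js x \<omega> \<partial>?\<nu>) = (\<integral>x. TT js (\<tau> js x) \<omega> \<partial>?\<nu>)" .
    qed
    also have "\<dots> = (\<integral>x. (\<Sum>js\<in>J. TT js (\<tau> js x) \<omega>) \<partial>?\<nu>)" using int2 by (intro Bochner_Integration.integral_sum[where I=J and f="\<lambda>js x. TT js (\<tau> js x) \<omega>", symmetric]) auto
    also have "\<dots> = (\<integral>x. Hring x \<omega> \<partial>?\<nu>)" by (simp add: Hring_eq)
    also have "\<dots> = (\<integral>x. Hring x \<omega> * (\<Prod>i<m. indicator (chi i n) (x i)) \<partial>?\<nu>)"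
      by (intro Bochner_Integration.integral_cong refl) (simp add: ind vanish)
    finally show "HH \<omega> = (\<integral>x. Hring x \<omega> * (\<Prod>i<m. indicator (chi i n) (x i)) \<partial>?\<nu>)" .
  qed
  have conj2: "lp_norm M p HH \<le>
            (SUP x\<in>space (PiM {..<m} \<mu>). lp_norm M p (Hring x)) *
            emeasure (PiM {..<m} \<mu>) (PiE {..<m} (\<lambda>i. chi i n))"
  proof -
    define K where "K = measure ?\<nu> S"
    have K0: "0 \<le> K" by (simp add: K_def)
    have emS: "emeasure ?\<nu> S = ennreal K" by (simp add: K_def nu.emeasure_eq_measure)
    have PiES: "PiE {..<m} (\<lambda>i. chi i n) = S" by (simp add: S_def)
    define EH where "EH = (\<integral>\<^sup>+\<omega>. ennreal (\<bar>HH \<omega>\<bar> powr p) \<partial>M)"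
    have lpH: "lp_norm M p HH = (if EH = \<infinity> then \<infinity> else ennreal (enn2real EH powr (1/p)))"
      by (simp add: lp_norm_def Let_def EH_def)
    define F where "F \<omega> x = ennreal (\<bar>Hring x \<omega>\<bar> powr p * indicator S x)" for \<omega> x
    have pw: "AE \<omega> in M. ennreal (\<bar>HH \<omega>\<bar> powr p) \<le> ennreal (K powr (p - 1)) * (\<integral>\<^sup>+x. F \<omega> x \<partial>?\<nu>)"
      using conj1
    proof (rule AE_mp, intro AE_I2 impI)
      fix \<omega> assume \<omega>: "\<omega> \<in> space M"
        and eq: "HH \<omega> = (\<integral>x. Hring x \<omega> * (\<Prod>i<m. indicator (chi i n) (x i)) \<partial>?\<nu>)"
      have "HH \<omega> = (\<integral>x. Hring x \<omega> * indicator S x \<partial>?\<nu>)"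
        unfolding eq by (intro Bochner_Integration.integral_cong refl) (simp add: ind)
      then show "ennreal (\<bar>HH \<omega>\<bar> powr p) \<le> ennreal (K powr (p - 1)) * (\<integral>\<^sup>+x. F \<omega> x \<partial>?\<nu>)"
        using holder_ind[OF fmnu S H\<omega>[OF \<omega>] p] by (simp add: F_def K_def)
    qed
    have EHle: "EH \<le> (\<integral>\<^sup>+\<omega>. ennreal (K powr (p - 1)) * (\<integral>\<^sup>+x. F \<omega> x \<partial>?\<nu>) \<partial>M)"
      unfolding EH_def by (rule nn_integral_mono_AE[OF pw])
    define s where "s = (SUP x\<in>space ?\<nu>. lp_norm M p (Hring x))"
    have main: "lp_norm M p HH \<le> s * ennreal K"
    proof (cases "K = 0")
      case True
      then have "EH \<le> 0" using EHle by simp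
      then have "EH = 0" by simp
      then show ?thesis using p by (simp add: lpH)
    next
      case False
      then have Kpos: "K > 0" using K0 by simp
      show ?thesis
      proof (cases "s = \<infinity>")
        case True
        then have "s * ennreal K = \<infinity>" using Kpos by (simp add: ennreal_mult_eq_top_iff)
        then show ?thesis by simp
      next
        case False
        define sr where "sr = enn2real s"
        have s_eq: "s = ennreal sr" using False unfolding sr_def by (cases s) auto
        have sr0: "0 \<le> sr" unfolding sr_def by simp
        have Ex: "(\<integral>\<^sup>+\<omega>. ennreal (\<bar>Hring x \<omega>\<bar> powr p) \<partial>M) \<le> ennreal (sr powr p)"
          if x: "x \<in> space ?\<nu>" for x
        proof -
          define E where "E = (\<integral>\<^sup>+\<omega>. ennreal (\<bar>Hring x \<omega>\<bar> powr p) \<partial>M)"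
          have "lp_norm M p (Hring x) \<le> s" unfolding s_def using x by (rule SUP_upper)
          moreover have lpx: "lp_norm M p (Hring x) = (if E = \<infinity> then \<infinity> else ennreal (enn2real E powr (1/p)))"
            unfolding lp_norm_def Let_def E_def by (rule refl)
          ultimately have le: "(if E = \<infinity> then \<infinity> else ennreal (enn2real E powr (1/p))) \<le> ennreal sr"
            unfolding s_eq by simp
          have Ef: "E \<noteq> \<infinity>"
          proof
            assume "E = \<infinity>"
            then have "\<infinity> \<le> ennreal sr" using le by simp
            then show False by (simp add: top_unique)
          qed
          then have "ennreal (enn2real E powr (1/p)) \<le> ennreal sr" using le by simp
          then have "enn2real E powr (1/p) \<le> sr" using sr0 by (simp add: ennreal_le_iff)
          then have "(enn2real E powr (1/p)) powr p \<le> sr powr p" using p by (intro powr_mono2) auto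
          moreover have "(enn2real E powr (1/p)) powr p = enn2real E" using p by (simp add: powr_powr)
          ultimately have "enn2real E \<le> sr powr p" by simp
          moreover have "E = ennreal (enn2real E)" using Ef by (cases E) auto
          ultimately show ?thesis unfolding E_def[symmetric] by (metis ennreal_leI)
        qed
        have Fm: "(\<lambda>x. F \<omega> x) \<in> borel_measurable ?\<nu>" if \<omega>: "\<omega> \<in> space M" for \<omega>
          using H\<omega>[OF \<omega>] S unfolding F_def by measurable
        have Fj: "(\<lambda>z. ennreal (K powr (p - 1)) * F (fst z) (snd z)) \<in> borel_measurable (M \<Otimes>\<^sub>M ?\<nu>)"
          using Hjoint S unfolding F_def by measurable
        have "(\<integral>\<^sup>+\<omega>. ennreal (K powr (p - 1)) * (\<integral>\<^sup>+x. F \<omega> x \<partial>?\<nu>) \<partial>M)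
            = (\<integral>\<^sup>+\<omega>. (\<integral>\<^sup>+x. ennreal (K powr (p - 1)) * F \<omega> x \<partial>?\<nu>) \<partial>M)"
        proof (rule nn_integral_cong)
          fix \<omega> assume \<omega>: "\<omega> \<in> space M"
          show "ennreal (K powr (p - 1)) * (\<integral>\<^sup>+x. F \<omega> x \<partial>?\<nu>) = (\<integral>\<^sup>+x. ennreal (K powr (p - 1)) * F \<omega> x \<partial>?\<nu>)"
            by (rule nn_integral_cmult[OF Fm[OF \<omega>], symmetric])
        qed
        also have "\<dots> = (\<integral>\<^sup>+x. (\<integral>\<^sup>+\<omega>. ennreal (K powr (p - 1)) * F \<omega> x \<partial>M) \<partial>?\<nu>)"
        proof -
          have Fj': "case_prod (\<lambda>\<omega> x. ennreal (K powr (p - 1)) * F \<omega> x) \<in> borel_measurable (M \<Otimes>\<^sub>M ?\<nu>)"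
            using Fj unfolding case_prod_beta' .
          show ?thesis by (rule PS.Fubini'[OF Fj', symmetric])
        qed
        also have "\<dots> \<le> (\<integral>\<^sup>+x. ennreal (K powr (p - 1) * sr powr p) * indicator S x \<partial>?\<nu>)"
        proof (intro nn_integral_mono)
          fix x assume x: "x \<in> space ?\<nu>"
          show "(\<integral>\<^sup>+\<omega>. ennreal (K powr (p - 1)) * F \<omega> x \<partial>M) \<le> ennreal (K powr (p - 1) * sr powr p) * indicator S x"
          proof (cases "x \<in> S")
            case True
            have hm: "(\<lambda>\<omega>. ennreal (\<bar>Hring x \<omega>\<bar> powr p)) \<in> borel_measurable M"
              using Hx[OF x] by measurable
            have "(\<integral>\<^sup>+\<omega>. ennreal (K powr (p - 1)) * F \<omega> x \<partial>M)
                = ennreal (K powr (p - 1)) * (\<integral>\<^sup>+\<omega>. ennreal (\<bar>Hring x \<omega>\<bar> powr p) \<partial>M)"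
              using True hm by (simp add: F_def nn_integral_cmult)
            also have "\<dots> \<le> ennreal (K powr (p - 1)) * ennreal (sr powr p)"
              by (intro mult_left_mono Ex x) auto
            also have "\<dots> = ennreal (K powr (p - 1) * sr powr p) * indicator S x"
              using True by (simp add: ennreal_mult)
            finally show ?thesis .
          next
            case False
            then show ?thesis by (simp add: F_def)
          qed
        qed
        also have "\<dots> = ennreal (K powr (p - 1) * sr powr p) * ennreal K"
          using S by (simp add: nn_integral_cmult_indicator emS)
        also have "\<dots> = ennreal ((K * sr) powr p)"
        proof -
          have "K powr (p - 1) * sr powr p * K = (K * sr) powr p"
            using Kpos sr0 by (simp add: powr_mult powr_diff)
          moreover have "ennreal (K powr (p - 1) * sr powr p) * ennreal K = ennreal (K powr (p - 1) * sr powr p * K)"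
            using K0 by (rule ennreal_mult''[symmetric])
          ultimately show ?thesis by simp
        qed
        finally have EHb: "EH \<le> ennreal ((K * sr) powr p)" using EHle by simp
        then have EHf: "EH \<noteq> \<infinity>" by (auto simp: top_unique)
        have "enn2real EH \<le> (K * sr) powr p"
          using EHb by (metis enn2real_ennreal enn2real_mono ennreal_neq_top powr_ge_zero top.not_eq_extremum)
        then have "enn2real EH powr (1/p) \<le> ((K * sr) powr p) powr (1/p)"
          using p by (intro powr_mono2) auto
        also have "((K * sr) powr p) powr (1/p) = K * sr" using p K0 sr0 by (simp add: powr_powr)
        finally have "lp_norm M p HH \<le> ennreal (K * sr)" using EHf by (simp add: lpH ennreal_leI)
        also have "ennreal (K * sr) = s * ennreal K" using K0 sr0 by (simp add: s_eq ennreal_mult mult.commute)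
        finally show ?thesis .
      qed
    qed
    then show ?thesis unfolding PiES emS s_def .
  qed
  show ?thesis using conj1 conj2 by blast
qed

end
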